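(* Let $x_1,\dots,x_m$ be independent $\sigma$-smooth MWIS instances on $n$ vertices and let $q>0$. With probability at least $1-4q\sigma^{-1}m^2n^8\ln n$ over the vertex weights, no two distinct elements of $\tau(x_1)\cup\dots\cup\tau(x_m)$ are within distance $q$ of each other.
   Context: Fix $\sigma\in(0,1)$. A $\sigma$-smooth MWIS instance has an arbitrary graph on vertex set $[n]$, and each vertex weight $w_v$ is drawn independently from its own distribution supported in $[0,1]$ with density at most $\sigma^{-1}$ pointwise (so almost surely all weights are distinct and nonzero). For an instance $x$ with weights $w$, $\tau(x)=\{\rho(v_1,v_2,k_1,k_2): v_1,v_2,k_1,k_2\in[n],\ v_1\ne v_2,\ k_1,k_2\ge2,\ k_1\ne k_2\}$ where $\rho(v_1,v_2,k_1,k_2)=\frac{\ln(w_{v_1})-\ln(w_{v_2})}{\ln(k_1)-\ln(k_2)}$. *)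

theory Defs
  imports "HOL-Probability.Probability"
begin

definition rho :: "(nat \<Rightarrow> real) \<Rightarrow> nat \<Rightarrow> nat \<Rightarrow> nat \<Rightarrow> nat \<Rightarrow> real" where
  "rho w v1 v2 k1 k2 = (ln (w v1) - ln (w v2)) / (ln (real k1) - ln (real k2))"

definition tau :: "nat \<Rightarrow> (nat \<Rightarrow> real) \<Rightarrow> real set" where
  "tau n w = {rho w v1 v2 k1 k2 | v1 v2 k1 k2.
      v1 \<in> {1..n} \<and> v2 \<in> {1..n} \<and> v1 \<noteq> v2 \<and>
      k1 \<in> {2..n} \<and> k2 \<in> {2..n} \<and> k1 \<noteq> k2}"

end

theory Submission
  imports Defs
begin

lemma exp_diff_le:
  fixes u v :: real assumes "v \<le> u" "u \<le> 0"
  shows "exp u - exp v \<le> u - v"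
proof -
  have e: "exp u - exp v = exp u * (1 - exp (v - u))" by (simp add: algebra_simps exp_diff)
  have "1 + (v - u) \<le> exp (v - u)" by (rule exp_ge_add_one_self)
  hence h1: "1 - exp (v - u) \<le> u - v" by linarith
  have h2: "0 \<le> 1 - exp (v - u)" using assms by simp
  have h3: "exp u \<le> 1" using assms by simp
  have "exp u * (1 - exp (v - u)) \<le> 1 * (u - v)"
    using h1 h2 h3 by (intro mult_mono) auto
  thus ?thesis using e by simp
qed

lemma density_slice:
  fixes g :: "real \<Rightarrow> ennreal"
  assumes g_le: "\<forall>x. g x \<le> ennreal c" and g0: "\<forall>x. x \<notin> {0..1} \<longrightarrow> g x = 0"
    and L: "0 \<le> L" and c: "0 \<le> c"
  shows "(\<integral>\<^sup>+ y. g y * indicator {y. \<bar>ln y - z\<bar> \<le> L} y \<partial>lborel) \<le> ennreal (2 * L * c)"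
proof -
  define a where "a = exp (z - L)"
  define b where "b = exp (min (z + L) 0)"
  have "(\<integral>\<^sup>+ y. g y * indicator {y. \<bar>ln y - z\<bar> \<le> L} y \<partial>lborel)
      \<le> (\<integral>\<^sup>+ y. ennreal c * indicator {a..b} y \<partial>lborel)"
  proof (rule nn_integral_mono_AE)
    show "AE y in lborel. g y * indicator {y. \<bar>ln y - z\<bar> \<le> L} y \<le> ennreal c * indicator {a..b} y"
      using AE_lborel_singleton[of 0]
    proof eventually_elim
      case (elim y)
      show ?case
      proof (cases "y \<in> {y. \<bar>ln y - z\<bar> \<le> L} \<and> y \<in> {0..1}")
        case True
        hence y: "0 < y" "y \<le> 1" "\<bar>ln y - z\<bar> \<le> L" using elim by auto
        have "ln y \<le> 0" using y by simp
        hence "ln y \<le> min (z + L) 0" "z - L \<le> ln y" using y by auto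
        hence "y \<le> b" "a \<le> y" unfolding a_def b_def using y
          by (metis exp_ln exp_le_cancel_iff)+
        thus ?thesis using g_le by (auto simp: indicator_def)
      next
        case False
        thus ?thesis using g0 by (auto simp: indicator_def)
      qed
    qed
  qed
  also have "\<dots> = ennreal c * emeasure lborel {a..b}"
    by (simp add: nn_integral_cmult)
  also have "\<dots> \<le> ennreal (2 * L * c)"
  proof (cases "a \<le> b")
    case True
    have "b - a \<le> min (z + L) 0 - (z - L)"
      unfolding a_def b_def using True
      by (intro exp_diff_le) (auto simp: a_def b_def)
    hence "b - a \<le> 2 * L" by linarith
    from mult_right_mono[OF this c] have "c * (b - a) \<le> 2 * L * c" by (simp add: mult.commute)
    thus ?thesis using True c by (simp add: ennreal_mult[symmetric] ennreal_leI)
  next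
    case False
    thus ?thesis by simp
  qed
  finally show ?thesis .
qed

lemma slice_bound:
  fixes X :: "'i \<Rightarrow> 'a \<Rightarrow> real" and F :: "('i \<Rightarrow> real) \<Rightarrow> real"
    and g :: "real \<Rightarrow> ennreal"
  assumes P: "prob_space M" and fin: "finite I" and pI: "p \<in> I"
    and ind: "prob_space.indep_vars M (\<lambda>_. borel) X I"
    and meas: "\<forall>i\<in>I. X i \<in> borel_measurable M"
    and dist: "distributed M lborel (X p) g"
    and g_le: "\<forall>x. g x \<le> ennreal c" and g0: "\<forall>x. x \<notin> {0..1} \<longrightarrow> g x = 0"
    and Fm: "F \<in> borel_measurable (PiM I (\<lambda>_. borel))"
    and Fp: "\<forall>x y. F (x(p:=y)) = F x"
    and L: "0 \<le> L" and c: "0 \<le> c"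
  shows "measure M {\<omega>\<in>space M. \<bar>ln (X p \<omega>) - F (\<lambda>j\<in>I. X j \<omega>)\<bar> \<le> L} \<le> 2 * L * c"
proof -
  interpret prob_space M by (rule P)
  define N where "N = (\<lambda>i. distr M borel (if i \<in> I then X i else (\<lambda>_. 0::real)))"
  have Nprob: "prob_space (N i)" for i
    unfolding N_def using meas by (intro prob_space_distr) auto
  interpret product_sigma_finite N
    unfolding product_sigma_finite_def
    using Nprob by (simp add: prob_space_imp_sigma_finite)
  define Xv where "Xv = (\<lambda>\<omega>. \<lambda>j\<in>I. X j \<omega>)"
  have Xvm: "Xv \<in> measurable M (PiM I (\<lambda>_. borel))"
    unfolding Xv_def using meas by (intro measurable_restrict) auto
  define G where "G = {x \<in> space (PiM I (\<lambda>_. (borel::real measure))). \<bar>ln (x p) - F x\<bar> \<le> L}"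
  have Gm: "G \<in> sets (PiM I (\<lambda>_. borel))"
    unfolding G_def using Fm pI by measurable
  have ev: "{\<omega>\<in>space M. \<bar>ln (X p \<omega>) - F (\<lambda>j\<in>I. X j \<omega>)\<bar> \<le> L} = Xv -` G \<inter> space M"
    using pI unfolding G_def Xv_def by (auto simp: space_PiM)
  have "distr M (PiM I (\<lambda>_. borel)) Xv = PiM I (\<lambda>i. distr M borel (X i))"
    unfolding Xv_def using ind pI meas
    by (subst indep_vars_iff_distr_eq_PiM'[symmetric]) auto
  also have "\<dots> = PiM I N"
    unfolding N_def by (intro PiM_cong) auto
  finally have dPi: "distr M (PiM I (\<lambda>_. borel)) Xv = PiM I N" .
  have sPi: "sets (PiM I N) = sets (PiM I (\<lambda>_. borel))"
    unfolding N_def by (intro sets_PiM_cong) auto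
  have "emeasure M (Xv -` G \<inter> space M) = emeasure (PiM I N) G"
    using Xvm Gm by (simp add: emeasure_distr[symmetric] dPi)
  also have "\<dots> = (\<integral>\<^sup>+ x. indicator G x \<partial>PiM I N)"
    using Gm sPi by simp
  also have "\<dots> \<le> ennreal (2 * L * c)"
  proof -
    have II: "I = insert p (I - {p})" using pI by auto
    have Gm': "G \<in> sets (PiM (insert p (I - {p})) N)" using Gm sPi II by simp
    have "(\<integral>\<^sup>+ x. indicator G x \<partial>PiM I N)
       = (\<integral>\<^sup>+ x. (\<integral>\<^sup>+ y. indicator G (x(p := y)) \<partial>N p) \<partial>PiM (I - {p}) N)"
      apply (subst II)
      apply (rule product_nn_integral_insert)
      using fin Gm' by auto
    also have "\<dots> \<le> (\<integral>\<^sup>+ x. ennreal (2 * L * c) \<partial>PiM (I - {p}) N)"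
    proof (rule nn_integral_mono)
      fix x
      define S where "S = {y::real. \<bar>ln y - F x\<bar> \<le> L}"
      have Sm: "S \<in> sets borel" unfolding S_def by measurable
      have "(\<integral>\<^sup>+ y. indicator G (x(p := y)) \<partial>N p) \<le> (\<integral>\<^sup>+ y. indicator S y \<partial>N p)"
        by (intro nn_integral_mono) (auto simp: indicator_def G_def S_def Fp)
      also have "\<dots> = emeasure (N p) S" using Sm by (simp add: N_def)
      also have "\<dots> = emeasure M (X p -` S \<inter> space M)"
        unfolding N_def using pI meas Sm by (simp add: emeasure_distr)
      also have "\<dots> = (\<integral>\<^sup>+y. g y * indicator S y \<partial>lborel)"
        using dist Sm by (intro distributed_emeasure) auto
      also have "\<dots> \<le> ennreal (2 * L * c)"
        unfolding S_def using g_le g0 L c by (rule density_slice)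
      finally show "(\<integral>\<^sup>+ y. indicator G (x(p := y)) \<partial>N p) \<le> ennreal (2 * L * c)" .
    qed
    also have "\<dots> = ennreal (2 * L * c)"
    proof -
      interpret Q: prob_space "PiM (I - {p}) N" by (intro prob_space_PiM Nprob)
      show ?thesis by (simp add: Q.emeasure_space_1)
    qed
    finally show ?thesis .
  qed
  finally have "emeasure M (Xv -` G \<inter> space M) \<le> ennreal (2 * L * c)" .
  thus ?thesis unfolding ev measure_def using L c by (simp add: enn2real_leI)
qed

lemma ln_sep:
  fixes P Q N :: nat
  assumes "1 \<le> P" "1 \<le> Q" "P \<le> N" "Q \<le> N" "P \<noteq> Q"
  shows "1 / real N \<le> \<bar>ln (real P) - ln (real Q)\<bar>"
proof -
  have key: "1 / real N \<le> ln (real A) - ln (real B)" if "1 \<le> B" "B < A" "A \<le> N" for A B :: nat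
  proof -
    have "ln (real B / real A) \<le> real B / real A - 1"
      using that by (intro ln_le_minus_one) auto
    hence "ln (real A) - ln (real B) \<ge> 1 - real B / real A"
      using that by (simp add: ln_div)
    moreover have "1 - real B / real A = (real A - real B) / real A" using that by (simp add: field_simps)
    moreover have "(real A - real B) / real A \<ge> 1 / real A"
      using that by (intro divide_right_mono) auto
    moreover have "1 / real A \<ge> 1 / real N" using that by (intro divide_left_mono) auto
    ultimately show ?thesis by linarith
  qed
  show ?thesis
  proof (cases "P < Q")
    case True
    from key[OF _ True] assms show ?thesis by auto
  next
    case False
    hence "Q < P" using assms by auto
    from key[OF _ this] assms show ?thesis by auto
  qed
qed

lemma arith1:
  fixes a b d r q K :: real
  assumes "d \<noteq> 0" "\<bar>d\<bar> \<le> K" "\<bar>r - (a - b) / d\<bar> \<le> q"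
  shows "\<bar>a - (d * r + b)\<bar> \<le> q * K" "\<bar>b - (a - d * r)\<bar> \<le> q * K"
proof -
  have e: "a - (d * r + b) = d * ((a - b) / d - r)" using assms by (simp add: field_simps)
  have "\<bar>d * ((a - b) / d - r)\<bar> = \<bar>d\<bar> * \<bar>r - (a - b) / d\<bar>" by (simp add: abs_mult abs_minus_commute)
  also have "\<dots> \<le> K * q" using assms by (intro mult_mono) auto
  finally show "\<bar>a - (d * r + b)\<bar> \<le> q * K" using e by (simp add: mult.commute)
  moreover have "b - (a - d * r) = - (a - (d * r + b))" by simp
  ultimately show "\<bar>b - (a - d * r)\<bar> \<le> q * K" by simp
qed

lemma arith3:
  fixes a c d q K e :: real
  assumes "c \<noteq> 0" "d \<noteq> 0" "\<bar>a / c - a / d\<bar> \<le> q" "\<bar>c\<bar> \<le> K" "\<bar>d\<bar> \<le> K"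
    "0 < e" "e \<le> \<bar>d - c\<bar>"
  shows "\<bar>a\<bar> \<le> q * K\<^sup>2 / e"
proof -
  have eq: "a / c - a / d = a * (d - c) / (c * d)" using assms by (simp add: field_simps)
  have "\<bar>a\<bar> * \<bar>d - c\<bar> / (\<bar>c\<bar> * \<bar>d\<bar>) \<le> q" using assms(3) unfolding eq by (simp add: abs_mult)
  hence h: "\<bar>a\<bar> * \<bar>d - c\<bar> \<le> q * (\<bar>c\<bar> * \<bar>d\<bar>)" using assms by (simp add: pos_divide_le_eq)
  have q0: "0 \<le> q" using assms(3) by linarith
  have "\<bar>c\<bar> * \<bar>d\<bar> \<le> K * K" using assms by (intro mult_mono) auto
  hence "q * (\<bar>c\<bar> * \<bar>d\<bar>) \<le> q * K\<^sup>2" using q0 by (simp add: mult_left_mono power2_eq_square)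
  moreover have "\<bar>a\<bar> * e \<le> \<bar>a\<bar> * \<bar>d - c\<bar>" using assms by (intro mult_left_mono) auto
  ultimately have "\<bar>a\<bar> * e \<le> q * K\<^sup>2" using h by linarith
  thus ?thesis using assms by (simp add: pos_le_divide_eq)
qed

definition SL :: "'a measure \<Rightarrow> (nat \<times> nat) set \<Rightarrow> (nat \<times> nat \<Rightarrow> 'a \<Rightarrow> real) \<Rightarrow> nat \<times> nat
    \<Rightarrow> ((nat \<times> nat \<Rightarrow> real) \<Rightarrow> real) \<Rightarrow> real \<Rightarrow> 'a set" where
  "SL M I X p F L = {\<omega>\<in>space M. \<bar>ln (X p \<omega>) - F (\<lambda>j\<in>I. X j \<omega>)\<bar> \<le> L}"

lemma SL_meas:
  assumes meas: "\<forall>i\<in>I. X i \<in> borel_measurable M" and pI: "p \<in> I"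
    and Fm: "F \<in> borel_measurable (PiM I (\<lambda>_. borel))"
  shows "SL M I X p F L \<in> sets M"
proof -
  have Xvm: "(\<lambda>\<omega>. \<lambda>j\<in>I. X j \<omega>) \<in> measurable M (PiM I (\<lambda>_. borel))"
    using meas by (intro measurable_restrict) auto
  have "(\<lambda>\<omega>. F (\<lambda>j\<in>I. X j \<omega>)) \<in> borel_measurable M"
    by (rule measurable_compose[OF Xvm Fm])
  moreover have "X p \<in> borel_measurable M" using meas pI by auto
  ultimately show ?thesis unfolding SL_def by measurable
qed

definition rhoX :: "(nat \<times> nat \<Rightarrow> real) \<Rightarrow> nat \<Rightarrow> nat \<Rightarrow> nat \<Rightarrow> nat \<Rightarrow> nat \<Rightarrow> real" where
  "rhoX x i v1 v2 k1 k2 = (ln (x (i, v1)) - ln (x (i, v2))) / (ln (real k1) - ln (real k2))"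

lemma rhoX_meas:
  assumes "(i, v1) \<in> I" "(i, v2) \<in> I"
  shows "(\<lambda>x. rhoX x i v1 v2 k1 k2) \<in> borel_measurable (PiM I (\<lambda>_. borel))"
  unfolding rhoX_def using assms by measurable

lemma ln_nat_bound:
  fixes k n :: nat assumes "2 \<le> k" "k \<le> n"
  shows "0 \<le> ln (real k)" "ln (real k) \<le> ln (real n)"
  using assms by auto

lemma dd_bound:
  fixes k1 k2 n :: nat assumes "2 \<le> k1" "k1 \<le> n" "2 \<le> k2" "k2 \<le> n"
  shows "\<bar>ln (real k1) - ln (real k2)\<bar> \<le> ln (real n)"
  using ln_nat_bound[OF assms(1,2)] ln_nat_bound[OF assms(3,4)] by linarith

lemma dd_nz:
  fixes k1 k2 :: nat assumes "2 \<le> k1" "2 \<le> k2" "k1 \<noteq> k2"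
  shows "ln (real k1) - ln (real k2) \<noteq> 0"
  using assms by auto

lemma case3_lemma:
  fixes a q :: real and k1 k2 k3 k4 n :: nat
  assumes k: "k1 \<in> {2..n}" "k2 \<in> {2..n}" "k3 \<in> {2..n}" "k4 \<in> {2..n}" "k1 \<noteq> k2" "k3 \<noteq> k4"
    and ne: "a / (ln (real k1) - ln (real k2)) \<noteq> a / (ln (real k3) - ln (real k4))"
    and le: "\<bar>a / (ln (real k1) - ln (real k2)) - a / (ln (real k3) - ln (real k4))\<bar> \<le> q"
  shows "\<bar>a\<bar> \<le> q * (ln (real n))\<^sup>2 / (1 / real (n * n))"
proof -
  define c where "c = ln (real k1) - ln (real k2)"
  define d where "d = ln (real k3) - ln (real k4)"
  have c0: "c \<noteq> 0" unfolding c_def using k by (intro dd_nz) auto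
  have d0: "d \<noteq> 0" unfolding d_def using k by (intro dd_nz) auto
  have cK: "\<bar>c\<bar> \<le> ln (real n)" unfolding c_def using k by (intro dd_bound) auto
  have dK: "\<bar>d\<bar> \<le> ln (real n)" unfolding d_def using k by (intro dd_bound) auto
  have dc: "d - c \<noteq> 0" using ne unfolding c_def d_def by auto
  have eq: "d - c = ln (real (k3 * k2)) - ln (real (k4 * k1))"
    unfolding c_def d_def using k by (simp add: ln_mult)
  have PQ: "k3 * k2 \<noteq> k4 * k1"
  proof
    assume h: "k3 * k2 = k4 * k1"
    have "ln (real (k3 * k2)) - ln (real (k4 * k1)) = 0" unfolding h by simp
    with eq dc show False by linarith
  qed
  have n2: "2 \<le> n" using k by auto
  have "1 / real (n * n) \<le> \<bar>ln (real (k3 * k2)) - ln (real (k4 * k1))\<bar>"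
    using k PQ by (intro ln_sep) (auto intro: mult_le_mono simp: Suc_le_eq)
  hence e: "1 / real (n * n) \<le> \<bar>d - c\<bar>" using eq by simp
  have "0 < 1 / real (n * n)" using n2 by simp
  from arith3[OF c0 d0 le[folded c_def d_def] cK dK this e] show ?thesis .
qed


theorem mainTheorem15:
  fixes M :: "'a measure" and W :: "nat \<Rightarrow> nat \<Rightarrow> 'a \<Rightarrow> real"
    and f :: "nat \<Rightarrow> nat \<Rightarrow> real \<Rightarrow> ennreal"
    and \<sigma> q :: real and m n :: nat
  assumes "prob_space M"
    and "0 < \<sigma>" and "\<sigma> < 1" and "0 < q"
    and "prob_space.indep_vars M (\<lambda>_. borel) (\<lambda>p. W (fst p) (snd p)) ({1..m} \<times> {1..n})"
    and "\<forall>i\<in>{1..m}. \<forall>v\<in>{1..n}. distributed M lborel (W i v) (f i v)"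
    and "\<forall>i\<in>{1..m}. \<forall>v\<in>{1..n}. \<forall>x. f i v x \<le> ennreal (1 / \<sigma>)"
    and "\<forall>i\<in>{1..m}. \<forall>v\<in>{1..n}. \<forall>x. x \<notin> {0..1} \<longrightarrow> f i v x = 0"
  shows "measure M {\<omega> \<in> space M.
            \<forall>a \<in> (\<Union>i\<in>{1..m}. tau n (\<lambda>v. W i v \<omega>)).
            \<forall>b \<in> (\<Union>i\<in>{1..m}. tau n (\<lambda>v. W i v \<omega>)).
              a \<noteq> b \<longrightarrow> q < \<bar>a - b\<bar>}
         \<ge> 1 - 4 * q * (1 / \<sigma>) * real m ^ 2 * real n ^ 8 * ln (real n)"
proof -
  note P = assms(1)
  interpret prob_space M by (rule assms(1))
  define I where "I = {1..m} \<times> {1..n}"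
  define X where "X = (\<lambda>p. W (fst p) (snd p))"
  have Wm: "W i v \<in> borel_measurable M" if "i \<in> {1..m}" "v \<in> {1..n}" for i v
    using assms(6) that unfolding distributed_def by auto
  have Xm: "\<forall>p\<in>I. X p \<in> borel_measurable M"
    unfolding I_def X_def using Wm by auto
  have ind: "indep_vars (\<lambda>_. borel) X I" using assms(5) unfolding X_def I_def .
  have finI: "finite I" unfolding I_def by auto
  define K where "K = ln (real n)"
  have K0: "0 \<le> K" unfolding K_def by (cases "n = 0") auto
  have sig: "0 \<le> 1 / \<sigma>" using assms(2) by simp
  have SLb: "measure M (SL M I X p F L) \<le> 2 * L * (1 / \<sigma>)"
    if h: "p \<in> I" "F \<in> borel_measurable (PiM I (\<lambda>_. borel))" "\<forall>x y. F (x(p:=y)) = F x" "0 \<le> L"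
    for p F L
  proof -
    obtain i v where p: "p = (i, v)" "i \<in> {1..m}" "v \<in> {1..n}" using h(1) unfolding I_def by auto
    show ?thesis unfolding SL_def
      apply (rule slice_bound[OF P finI h(1) ind Xm, where g = "f i v"])
      using assms(6,7,8) p h sig by (auto simp: X_def simp del: fun_upd_apply)
  qed
  have SLm: "SL M I X p F L \<in> sets M"
    if h: "p \<in> I" "F \<in> borel_measurable (PiM I (\<lambda>_. borel))" for p F L
    using SL_meas[OF Xm h] .
  define Box where "Box = {1..m} \<times> {1..m} \<times> {1..n} \<times> {1..n} \<times> {1..n} \<times> {1..n}
      \<times> {2..n} \<times> {2..n} \<times> {2..n} \<times> {2..n::nat}"
  define Cv where "Cv = Box \<inter> {(i,j,v1,v2,v3,v4,k1,k2,k3,k4). v1 \<noteq> v2 \<and> v3 \<noteq> v4 \<and> k1 \<noteq> k2 \<and> k3 \<noteq> k4}"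
  define T where "T = ({1..m} \<times> {1..n} \<times> {1..n}) \<inter> {(i,v1,v2). v1 \<noteq> (v2::nat)}"
  have finCv: "finite Cv" unfolding Cv_def Box_def by auto
  have finT: "finite T" unfolding T_def by auto
  have cardCv: "card Cv \<le> m^2 * n^8"
  proof -
    have "card Cv \<le> card Box" unfolding Cv_def by (intro card_mono) (auto simp: Box_def)
    also have "card Box = m * m * n * n * n * n * (n-1) * (n-1) * (n-1) * (n-1)"
      unfolding Box_def by (simp add: card_cartesian_product)
    also have "\<dots> \<le> m * m * n * n * n * n * n * n * n * n"
      by (intro mult_le_mono) auto
    also have "\<dots> = m^2 * n^8" by (simp add: power_def)
    finally show ?thesis .
  qed
  have cardT: "card T \<le> m * n^2"
  proof -
    have "card T \<le> card ({1..m} \<times> {1..n} \<times> {1..n})" unfolding T_def by (intro card_mono) auto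
    also have "\<dots> = m * n^2" by (simp add: card_cartesian_product power2_eq_square)
    finally show ?thesis .
  qed
  define bad where "bad = (\<lambda>(i,j,v1,v2,v3,v4,k1,k2,k3,k4).
      {\<omega>\<in>space M. rho (\<lambda>v. W i v \<omega>) v1 v2 k1 k2 \<noteq> rho (\<lambda>v. W j v \<omega>) v3 v4 k3 k4 \<and>
        \<bar>rho (\<lambda>v. W i v \<omega>) v1 v2 k1 k2 - rho (\<lambda>v. W j v \<omega>) v3 v4 k3 k4\<bar> \<le> q})"
  define G0 where "G0 = {\<omega> \<in> space M.
            \<forall>a \<in> (\<Union>i\<in>{1..m}. tau n (\<lambda>v. W i v \<omega>)).
            \<forall>b \<in> (\<Union>i\<in>{1..m}. tau n (\<lambda>v. W i v \<omega>)).
              a \<noteq> b \<longrightarrow> q < \<bar>a - b\<bar>}"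
  have Geq: "G0 = space M - (\<Union>c\<in>Cv. bad c)"
  proof (intro equalityI subsetI)
    fix \<omega> assume \<omega>: "\<omega> \<in> G0"
    show "\<omega> \<in> space M - (\<Union>c\<in>Cv. bad c)"
    proof (clarsimp simp: \<omega>[unfolded G0_def, THEN CollectD, THEN conjunct1])
      fix i j v1 v2 v3 v4 k1 k2 k3 k4
      assume c: "(i,j,v1,v2,v3,v4,k1,k2,k3,k4) \<in> Cv" and b: "\<omega> \<in> bad (i,j,v1,v2,v3,v4,k1,k2,k3,k4)"
      have a1: "rho (\<lambda>v. W i v \<omega>) v1 v2 k1 k2 \<in> (\<Union>i\<in>{1..m}. tau n (\<lambda>v. W i v \<omega>))"
        using c unfolding Cv_def Box_def tau_def by blast
      have a2: "rho (\<lambda>v. W j v \<omega>) v3 v4 k3 k4 \<in> (\<Union>i\<in>{1..m}. tau n (\<lambda>v. W i v \<omega>))"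
        using c unfolding Cv_def Box_def tau_def by blast
      show False using \<omega> a1 a2 b unfolding G0_def bad_def by fastforce
    qed
  next
    fix \<omega> assume \<omega>: "\<omega> \<in> space M - (\<Union>c\<in>Cv. bad c)"
    show "\<omega> \<in> G0" unfolding G0_def
    proof (intro CollectI conjI ballI impI)
      show "\<omega> \<in> space M" using \<omega> by auto
      fix a b assume a': "a \<in> (\<Union>i\<in>{1..m}. tau n (\<lambda>v. W i v \<omega>))"
        and b': "b \<in> (\<Union>i\<in>{1..m}. tau n (\<lambda>v. W i v \<omega>))" and ab: "a \<noteq> b"
      obtain i where i: "i \<in> {1..m}" and a: "a \<in> tau n (\<lambda>v. W i v \<omega>)" using a' by blast
      obtain j where j: "j \<in> {1..m}" and b: "b \<in> tau n (\<lambda>v. W j v \<omega>)" using b' by blast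
      obtain v1 v2 k1 k2 where A: "a = rho (\<lambda>v. W i v \<omega>) v1 v2 k1 k2" "v1 \<in> {1..n}" "v2 \<in> {1..n}" "v1 \<noteq> v2"
        "k1 \<in> {2..n}" "k2 \<in> {2..n}" "k1 \<noteq> k2" using a unfolding tau_def by blast
      obtain v3 v4 k3 k4 where B: "b = rho (\<lambda>v. W j v \<omega>) v3 v4 k3 k4" "v3 \<in> {1..n}" "v4 \<in> {1..n}" "v3 \<noteq> v4"
        "k3 \<in> {2..n}" "k4 \<in> {2..n}" "k3 \<noteq> k4" using b unfolding tau_def by blast
      have "(i,j,v1,v2,v3,v4,k1,k2,k3,k4) \<in> Cv" using A B i j unfolding Cv_def Box_def by auto
      hence "\<omega> \<notin> bad (i,j,v1,v2,v3,v4,k1,k2,k3,k4)" using \<omega> by auto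
      thus "q < \<bar>a - b\<bar>" using \<omega> A(1) B(1) ab unfolding bad_def by auto
    qed
  qed
  have badm: "bad c \<in> sets M" if "c \<in> Cv" for c
  proof -
    obtain i j v1 v2 v3 v4 k1 k2 k3 k4 where c: "c = (i,j,v1,v2,v3,v4,k1,k2,k3,k4)" by (metis prod.collapse)
    have [measurable]: "W i v1 \<in> borel_measurable M" "W i v2 \<in> borel_measurable M"
      "W j v3 \<in> borel_measurable M" "W j v4 \<in> borel_measurable M"
      using that Wm unfolding c Cv_def Box_def by auto
    show ?thesis unfolding c bad_def rho_def by simp measurable
  qed
  define L3 where "L3 = q * K\<^sup>2 / (1 / real (n * n))"
  have L30: "0 \<le> L3" unfolding L3_def using assms(4) by simp
  define A where "A = (\<lambda>(i,j,v1,v2,v3,v4,k1,k2,k3,k4).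
      if (j,v3) \<noteq> (i,v1) \<and> (j,v3) \<noteq> (i,v2) then
        SL M I X (j,v3) (\<lambda>x. (ln (real k3) - ln (real k4)) * rhoX x i v1 v2 k1 k2 + ln (x (j,v4))) (q * K)
      else if (j,v4) \<noteq> (i,v1) \<and> (j,v4) \<noteq> (i,v2) then
        SL M I X (j,v4) (\<lambda>x. ln (x (j,v3)) - (ln (real k3) - ln (real k4)) * rhoX x i v1 v2 k1 k2) (q * K)
      else {})"
  define A3 where "A3 = (\<lambda>(i,v1,v2). SL M I X (i,v1) (\<lambda>x. ln (x (i,v2))) L3)"
  have qK: "0 \<le> q * K" using assms(4) K0 by simp
  have Aprop: "A c \<in> sets M \<and> measure M (A c) \<le> 2 * (q * K) * (1 / \<sigma>)" if "c \<in> Cv" for c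
  proof -
    obtain i j v1 v2 v3 v4 k1 k2 k3 k4 where c: "c = (i,j,v1,v2,v3,v4,k1,k2,k3,k4)" by (metis prod.collapse)
    have mem: "(i,v1) \<in> I" "(i,v2) \<in> I" "(j,v3) \<in> I" "(j,v4) \<in> I" and ne: "v3 \<noteq> v4"
      using that unfolding c Cv_def Box_def I_def by auto
    have rm: "(\<lambda>x. rhoX x i v1 v2 k1 k2) \<in> borel_measurable (PiM I (\<lambda>_. borel))"
      using mem by (intro rhoX_meas)
    have m3: "(\<lambda>x. ln (x (j,v3))) \<in> borel_measurable (PiM I (\<lambda>_. borel::real measure))"
      using mem by measurable
    have m4: "(\<lambda>x. ln (x (j,v4))) \<in> borel_measurable (PiM I (\<lambda>_. borel::real measure))"
      using mem by measurable
    have F1m: "(\<lambda>x. (ln (real k3) - ln (real k4)) * rhoX x i v1 v2 k1 k2 + ln (x (j,v4)))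
        \<in> borel_measurable (PiM I (\<lambda>_. borel))" using rm m4 by measurable
    have F2m: "(\<lambda>x. ln (x (j,v3)) - (ln (real k3) - ln (real k4)) * rhoX x i v1 v2 k1 k2)
        \<in> borel_measurable (PiM I (\<lambda>_. borel))" using rm m3 by measurable
    show ?thesis
    proof (cases "(j,v3) \<noteq> (i,v1) \<and> (j,v3) \<noteq> (i,v2)")
      case True
      have "\<forall>x y. (\<lambda>x. (ln (real k3) - ln (real k4)) * rhoX x i v1 v2 k1 k2 + ln (x (j,v4))) (x((j,v3):=y))
          = (\<lambda>x. (ln (real k3) - ln (real k4)) * rhoX x i v1 v2 k1 k2 + ln (x (j,v4))) x"
        using True ne by (auto simp: rhoX_def)
      then show ?thesis unfolding c A_def prod.case if_P[OF True] using SLm[OF mem(3) F1m] SLb[OF mem(3) F1m _ qK] by simp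
    next
      case False
      note F = False
      show ?thesis
      proof (cases "(j,v4) \<noteq> (i,v1) \<and> (j,v4) \<noteq> (i,v2)")
        case True
        have "\<forall>x y. (\<lambda>x. ln (x (j,v3)) - (ln (real k3) - ln (real k4)) * rhoX x i v1 v2 k1 k2) (x((j,v4):=y))
          = (\<lambda>x. ln (x (j,v3)) - (ln (real k3) - ln (real k4)) * rhoX x i v1 v2 k1 k2) x"
          using True ne by (auto simp: rhoX_def)
        then show ?thesis unfolding c A_def prod.case if_not_P[OF F] if_P[OF True] using SLm[OF mem(4) F2m] SLb[OF mem(4) F2m _ qK] by simp
      next
        case False
        then show ?thesis unfolding c A_def prod.case if_not_P[OF F] if_not_P[OF False] using qK sig by simp
      qed
    qed
  qed
  have A3prop: "A3 t \<in> sets M \<and> measure M (A3 t) \<le> 2 * L3 * (1 / \<sigma>)" if "t \<in> T" for t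
  proof -
    obtain i v1 v2 where t: "t = (i,v1,v2)" by (metis prod.collapse)
    have mem: "(i,v1) \<in> I" "(i,v2) \<in> I" and ne: "v1 \<noteq> v2"
      using that unfolding t T_def I_def by auto
    have Fm: "(\<lambda>x. ln (x (i,v2))) \<in> borel_measurable (PiM I (\<lambda>_. borel::real measure))"
      using mem by measurable
    have "\<forall>x y. (\<lambda>x. ln (x (i,v2))) (x((i,v1):=y)) = (\<lambda>x. ln (x (i,v2))) x" using ne by auto
    then show ?thesis unfolding t A3_def using SLm[OF mem(1) Fm] SLb[OF mem(1) Fm _ L30] by simp
  qed
  have cover: "(\<Union>c\<in>Cv. bad c) \<subseteq> (\<Union>c\<in>Cv. A c) \<union> (\<Union>t\<in>T. A3 t)"
  proof
    fix \<omega> assume "\<omega> \<in> (\<Union>c\<in>Cv. bad c)"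
    then obtain c where cC: "c \<in> Cv" and wb: "\<omega> \<in> bad c" by blast
    obtain i j v1 v2 v3 v4 k1 k2 k3 k4 where c: "c = (i,j,v1,v2,v3,v4,k1,k2,k3,k4)" by (metis prod.collapse)
    have mem: "(i,v1) \<in> I" "(i,v2) \<in> I" "(j,v3) \<in> I" "(j,v4) \<in> I"
      and ne: "v3 \<noteq> v4" "v1 \<noteq> v2"
      and k: "k1 \<in> {2..n}" "k2 \<in> {2..n}" "k3 \<in> {2..n}" "k4 \<in> {2..n}" "k1 \<noteq> k2" "k3 \<noteq> k4"
      and ij: "i \<in> {1..m}" "v1 \<in> {1..n}" "v2 \<in> {1..n}"
      using cC unfolding c Cv_def Box_def I_def by auto
    define r where "r = rho (\<lambda>v. W i v \<omega>) v1 v2 k1 k2"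
    define r' where "r' = rho (\<lambda>v. W j v \<omega>) v3 v4 k3 k4"
    define d where "d = ln (real k3) - ln (real k4)"
    have w: "\<omega> \<in> space M" "r \<noteq> r'" "\<bar>r - r'\<bar> \<le> q"
      using wb unfolding c bad_def r_def r'_def by auto
    have d0: "d \<noteq> 0" unfolding d_def using k by (intro dd_nz) auto
    have dK: "\<bar>d\<bar> \<le> K" unfolding d_def K_def using k by (intro dd_bound) auto
    have r'eq: "r' = (ln (W j v3 \<omega>) - ln (W j v4 \<omega>)) / d" unfolding r'_def rho_def d_def by simp
    have rX: "rhoX (\<lambda>p\<in>I. X p \<omega>) i v1 v2 k1 k2 = r"
      unfolding rhoX_def r_def rho_def using mem by (simp add: X_def)
    have ar: "\<bar>r - (ln (W j v3 \<omega>) - ln (W j v4 \<omega>)) / d\<bar> \<le> q" using w r'eq by simp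
    note AR = arith1[OF d0 dK ar]
    show "\<omega> \<in> (\<Union>c\<in>Cv. A c) \<union> (\<Union>t\<in>T. A3 t)"
    proof (cases "(j,v3) \<noteq> (i,v1) \<and> (j,v3) \<noteq> (i,v2)")
      case True
      have "\<omega> \<in> A c" unfolding c A_def prod.case if_P[OF True] SL_def
        using w(1) AR(1) rX mem by (simp add: X_def d_def)
      thus ?thesis using cC by blast
    next
      case F: False
      show ?thesis
      proof (cases "(j,v4) \<noteq> (i,v1) \<and> (j,v4) \<noteq> (i,v2)")
        case True
        have "\<omega> \<in> A c" unfolding c A_def prod.case if_not_P[OF F] if_P[OF True] SL_def
          using w(1) AR(2) rX mem by (simp add: X_def d_def)
        thus ?thesis using cC by blast
      next
        case False
        hence ji: "j = i" and vv: "(v3 = v1 \<and> v4 = v2) \<or> (v3 = v2 \<and> v4 = v1)"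
          using F ne by auto
        define a where "a = ln (W i v1 \<omega>) - ln (W i v2 \<omega>)"
        have req: "r = a / (ln (real k1) - ln (real k2))" unfolding r_def rho_def a_def by simp
        have "\<bar>a\<bar> \<le> L3"
          using vv
        proof
          assume "v3 = v1 \<and> v4 = v2"
          hence "r' = a / (ln (real k3) - ln (real k4))" unfolding r'_def rho_def a_def ji by simp
          thus ?thesis unfolding L3_def K_def using case3_lemma[OF k, of a q] w req by simp
        next
          assume "v3 = v2 \<and> v4 = v1"
          hence "r' = a / (ln (real k4) - ln (real k3))" unfolding r'_def rho_def a_def ji
            by (simp, metis minus_diff_eq minus_divide_divide)
          thus ?thesis unfolding L3_def K_def using case3_lemma[OF k(1,2,4,3,5) k(6)[symmetric], of a q] w req by simp
        qed
        hence "\<omega> \<in> A3 (i,v1,v2)" unfolding A3_def prod.case SL_def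
          using w(1) mem by (simp add: X_def a_def)
        moreover have "(i,v1,v2) \<in> T" unfolding T_def using ij ne by auto
        ultimately show ?thesis by blast
      qed
    qed
  qed
  define U where "U = (\<Union>c\<in>Cv. A c) \<union> (\<Union>t\<in>T. A3 t)"
  have UA: "(\<Union>c\<in>Cv. A c) \<in> sets M" using Aprop finCv by auto
  have UA3: "(\<Union>t\<in>T. A3 t) \<in> sets M" using A3prop finT by auto
  have Bm: "(\<Union>c\<in>Cv. bad c) \<in> sets M" using badm finCv by auto
  have "measure M (\<Union>c\<in>Cv. bad c) \<le> measure M U"
    using cover UA UA3 unfolding U_def by (intro finite_measure_mono) auto
  also have "\<dots> \<le> measure M (\<Union>c\<in>Cv. A c) + measure M (\<Union>t\<in>T. A3 t)"
    unfolding U_def using UA UA3 by (rule measure_Un_le)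
  also have "\<dots> \<le> (\<Sum>c\<in>Cv. measure M (A c)) + (\<Sum>t\<in>T. measure M (A3 t))"
    using Aprop A3prop finCv finT by (intro add_mono measure_UNION_le) auto
  also have "\<dots> \<le> real (card Cv) * (2 * (q * K) * (1 / \<sigma>)) + real (card T) * (2 * L3 * (1 / \<sigma>))"
    using Aprop A3prop by (intro add_mono sum_bounded_above) auto
  also have "\<dots> \<le> 4 * q * (1 / \<sigma>) * real m ^ 2 * real n ^ 8 * ln (real n)"
  proof -
    define Q where "Q = 2 * q * (1 / \<sigma>)"
    have Q0: "0 \<le> Q" unfolding Q_def using assms(4) sig by simp
    have t1: "real (card Cv) * (2 * (q * K) * (1 / \<sigma>)) \<le> real m ^ 2 * real n ^ 8 * (Q * K)"
    proof -
      have "real (card Cv) \<le> real m ^ 2 * real n ^ 8" using cardCv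
        by (metis of_nat_le_iff of_nat_mult of_nat_power)
      from mult_right_mono[OF this mult_nonneg_nonneg[OF Q0 K0]] show ?thesis
        by (simp add: Q_def algebra_simps)
    qed
    have t2: "real (card T) * (2 * L3 * (1 / \<sigma>)) \<le> real m ^ 2 * real n ^ 8 * (Q * K)"
    proof (cases "n = 0")
      case True
      thus ?thesis using cardT by (simp add: K_def L3_def)
    next
      case False
      have KN: "K \<le> real n" unfolding K_def using False by (intro less_imp_le ln_less_self) auto
      have L3e: "L3 = q * K\<^sup>2 * real n ^ 2" unfolding L3_def by (simp add: power2_eq_square)
      have cT: "real (card T) \<le> real m * real n ^ 2" using cardT
        by (metis of_nat_le_iff of_nat_mult of_nat_power)
      have "real (card T) * (2 * L3 * (1 / \<sigma>)) = real (card T) * (real n ^ 2 * K * (Q * K))"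
        unfolding L3e Q_def by (simp add: power2_eq_square algebra_simps)
      also have "\<dots> \<le> (real m * real n ^ 2) * (real n ^ 2 * K * (Q * K))"
        using cT Q0 K0 by (intro mult_right_mono) auto
      also have "\<dots> \<le> (real m ^ 2 * real n ^ 2) * (real n ^ 6 * (Q * K))"
      proof (rule mult_mono)
        show "real m * real n ^ 2 \<le> real m ^ 2 * real n ^ 2"
        proof -
          have "real m \<le> real m ^ 2" using le_square[of m]
            by (metis of_nat_le_iff of_nat_mult power2_eq_square)
          thus ?thesis by (intro mult_right_mono) auto
        qed
        have "real n ^ 2 * K \<le> real n ^ 2 * real n" using KN by (intro mult_left_mono) auto
        also have "\<dots> = real n ^ 3" by (simp add: power_def)
        also have "\<dots> \<le> real n ^ 6" using False by (intro power_increasing) auto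
        finally show "real n ^ 2 * K * (Q * K) \<le> real n ^ 6 * (Q * K)"
          using Q0 K0 by (intro mult_right_mono) auto
      qed (use Q0 K0 in auto)
      also have "\<dots> = real m ^ 2 * real n ^ 8 * (Q * K)" by (simp add: algebra_simps power_add[symmetric])
      finally show ?thesis .
    qed
    have "real (card Cv) * (2 * (q * K) * (1 / \<sigma>)) + real (card T) * (2 * L3 * (1 / \<sigma>))
        \<le> 2 * (real m ^ 2 * real n ^ 8 * (Q * K))" using t1 t2 by linarith
    also have "\<dots> = 4 * q * (1 / \<sigma>) * real m ^ 2 * real n ^ 8 * ln (real n)"
      unfolding Q_def K_def by (simp add: algebra_simps)
    finally show ?thesis .
  qed
  finally have bb: "measure M (\<Union>c\<in>Cv. bad c) \<le> 4 * q * (1 / \<sigma>) * real m ^ 2 * real n ^ 8 * ln (real n)" .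
  have "measure M G0 = 1 - measure M (\<Union>c\<in>Cv. bad c)"
    unfolding Geq using Bm by (rule prob_compl)
  thus ?thesis using bb unfolding G0_def by simp
qed

end
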